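(* Let $\mathcal V$ be a finite set, $2\le k\le|\mathcal V|-2$, let $\Gamma\subset\binom{\mathcal V}{k}$ be a code, and suppose that $\Gamma$ is $G$-strongly incidence-transitive with $G\le{\rm Aut}(\Gamma)\cap{\rm Sym}(\mathcal V)$. Let $\gamma\in\Gamma$, and suppose that $G_\gamma<H<G$ with $H$ transitive on $\mathcal V$ and leaving invariant a non-trivial partition $\Pi$ of $\mathcal V$. Then $\gamma$ is a union of some of the blocks of $\Pi$.
   Context: A code is a proper non-empty subset of $\binom{\mathcal V}{k}$, the $k$-subsets of $\mathcal V$ (vertices of the Johnson graph, adjacent iff meeting in $k-1$ points); ${\rm Aut}(\Gamma)$ is its setwise stabiliser in the automorphism group of the Johnson graph. $\Gamma$ is $G$-strongly incidence-transitive if $G$ is transitive on $\Gamma$ and, for $\gamma\in\Gamma$, $G_\gamma$ is transitive on $\gamma\times(\mathcal V\setminus\gamma)$. *)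

theory Defs
  imports "HOL-Algebra.Bij" "HOL-Library.Disjoint_Sets"
begin

definition ksubsets :: "'a set \<Rightarrow> nat \<Rightarrow> 'a set set" where
  "ksubsets V k = {A. A \<subseteq> V \<and> card A = k}"

definition is_code :: "'a set \<Rightarrow> nat \<Rightarrow> 'a set set \<Rightarrow> bool" where
  "is_code V k \<Gamma> \<longleftrightarrow> \<Gamma> \<subseteq> ksubsets V k \<and> \<Gamma> \<noteq> {} \<and> \<Gamma> \<noteq> ksubsets V k"

definition set_stab :: "('a \<Rightarrow> 'a) set \<Rightarrow> 'a set \<Rightarrow> ('a \<Rightarrow> 'a) set" where
  "set_stab G A = {g \<in> G. g ` A = A}"

definition strongly_incidence_transitive ::
  "'a set \<Rightarrow> ('a \<Rightarrow> 'a) set \<Rightarrow> 'a set set \<Rightarrow> bool" where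
  "strongly_incidence_transitive V G \<Gamma> \<longleftrightarrow>
     (\<forall>\<gamma>1\<in>\<Gamma>. \<forall>\<gamma>2\<in>\<Gamma>. \<exists>g\<in>G. g ` \<gamma>1 = \<gamma>2) \<and>
     (\<forall>\<gamma>\<in>\<Gamma>. \<forall>a\<in>\<gamma>. \<forall>b\<in>V - \<gamma>. \<forall>c\<in>\<gamma>. \<forall>d\<in>V - \<gamma>.
        \<exists>g\<in>set_stab G \<gamma>. g a = c \<and> g b = d)"

definition transitive_on :: "'a set \<Rightarrow> ('a \<Rightarrow> 'a) set \<Rightarrow> bool" where
  "transitive_on V H \<longleftrightarrow> (\<forall>x\<in>V. \<forall>y\<in>V. \<exists>h\<in>H. h x = y)"

definition nontrivial_partition :: "'a set \<Rightarrow> 'a set set \<Rightarrow> bool" where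
  "nontrivial_partition V P \<longleftrightarrow> partition_on V P \<and> P \<noteq> {V} \<and> P \<noteq> (\<lambda>x. {x}) ` V"

end

theory Submission
  imports Defs
begin

theorem lemma5p2:
  fixes V :: "'a set" and k :: nat and \<Gamma> :: "'a set set"
    and G H :: "('a \<Rightarrow> 'a) set" and \<gamma> :: "'a set" and P :: "'a set set"
  assumes "finite V"
    and "2 \<le> k" and "k + 2 \<le> card V"
    and "is_code V k \<Gamma>"
    and "subgroup G (BijGroup V)"
    and "\<forall>g\<in>G. (\<lambda>A. g ` A) ` \<Gamma> = \<Gamma>"
    and "strongly_incidence_transitive V G \<Gamma>"
    and "\<gamma> \<in> \<Gamma>"
    and "subgroup H (BijGroup V)"
    and "set_stab G \<gamma> \<subset> H" and "H \<subset> G"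
    and "transitive_on V H"
    and "nontrivial_partition V P"
    and "\<forall>h\<in>H. \<forall>B\<in>P. h ` B \<in> P"
  shows "\<exists>S\<subseteq>P. \<gamma> = \<Union>S"
proof -
  have gV: "\<gamma> \<subseteq> V" and cg: "card \<gamma> = k"
    using assms(4,8) unfolding is_code_def ksubsets_def by auto
  have fg: "finite \<gamma>" using gV assms(1) finite_subset by blast
  have ne: "\<gamma> \<noteq> {}" using cg assms(2) by auto
  have "card (V - \<gamma>) = card V - k" using card_Diff_subset[OF fg gV] cg by simp
  moreover have "card V - k \<ge> 2" using assms(3) by simp
  ultimately have ne2: "V - \<gamma> \<noteq> {}" by (intro notI) simp
  have part: "partition_on V P" and nt: "P \<noteq> {V}"
    using assms(13) unfolding nontrivial_partition_def by auto
  have PU: "\<Union>P = V" and Pd: "disjoint P" and Pe: "{} \<notin> P"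
    using part unfolding partition_on_def by auto
  have same: "B1 = B2" if "B1 \<in> P" "B2 \<in> P" "x \<in> B1" "x \<in> B2" for B1 B2 x
    using Pd that disjointD by blast
  have sub: "B \<subseteq> \<gamma>" if B: "B \<in> P" "B \<inter> \<gamma> \<noteq> {}" for B
  proof (rule ccontr)
    assume "\<not> B \<subseteq> \<gamma>"
    then obtain b where b: "b \<in> B" "b \<notin> \<gamma>" by auto
    obtain a where a: "a \<in> B" "a \<in> \<gamma>" using B by auto
    have bV: "b \<in> V" using b B PU by auto
    have pair: "\<exists>B'\<in>P. c \<in> B' \<and> d \<in> B'" if cc: "c \<in> \<gamma>" and dd: "d \<in> V - \<gamma>" for c d
    proof -
      have sit: "\<forall>\<gamma>\<in>\<Gamma>. \<forall>a\<in>\<gamma>. \<forall>b\<in>V - \<gamma>. \<forall>c\<in>\<gamma>. \<forall>d\<in>V - \<gamma>.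
        \<exists>g\<in>set_stab G \<gamma>. g a = c \<and> g b = d"
        using assms(7) unfolding strongly_incidence_transitive_def by (rule conjunct2)
      have bd: "b \<in> V - \<gamma>" using bV b by simp
      obtain g where g: "g \<in> set_stab G \<gamma>" "g a = c" "g b = d"
        using bspec[OF bspec[OF bspec[OF bspec[OF bspec[OF sit assms(8)] a(2)] bd] cc] dd] by blast
      have "g \<in> H" using g(1) assms(10) by blast
      hence "g ` B \<in> P" using assms(14) B by blast
      thus ?thesis using g a b by blast
    qed
    obtain c0 where c0: "c0 \<in> \<gamma>" using ne by auto
    obtain d0 where d0: "d0 \<in> V - \<gamma>" using ne2 by auto
    obtain B0 where B0: "B0 \<in> P" "c0 \<in> B0" "d0 \<in> B0" using pair c0 d0 by blast
    have "V \<subseteq> B0"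
    proof
      fix x assume x: "x \<in> V"
      show "x \<in> B0"
      proof (cases "x \<in> \<gamma>")
        case True
        then obtain B1 where "B1 \<in> P" "x \<in> B1" "d0 \<in> B1" using pair d0 by blast
        thus ?thesis using same B0 by blast
      next
        case False
        then obtain B1 where "B1 \<in> P" "c0 \<in> B1" "x \<in> B1" using pair c0 x by blast
        thus ?thesis using same B0 by blast
      qed
    qed
    hence V0: "B0 = V" using B0 PU by auto
    have "P = {V}"
    proof
      show "P \<subseteq> {V}"
      proof
        fix B1 assume B1: "B1 \<in> P"
        then obtain y where y: "y \<in> B1" using Pe by (metis all_not_in_conv)
        hence "y \<in> V" using B1 PU by auto
        thus "B1 \<in> {V}" using same[OF B1 B0(1) y] V0 by auto
      qed
    qed (use B0 V0 in auto)
    thus False using nt by simp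
  qed
  show ?thesis
  proof (intro exI[of _ "{B\<in>P. B \<subseteq> \<gamma>}"] conjI)
    show "\<gamma> = \<Union>{B\<in>P. B \<subseteq> \<gamma>}"
    proof
      show "\<gamma> \<subseteq> \<Union>{B\<in>P. B \<subseteq> \<gamma>}"
      proof
        fix x assume x: "x \<in> \<gamma>"
        then obtain B where "B \<in> P" "x \<in> B" using gV PU by blast
        thus "x \<in> \<Union>{B\<in>P. B \<subseteq> \<gamma>}" using sub x by blast
      qed
    qed auto
  qed auto
qed

end
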